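(* Let $k\ge 2$, $n=2^k$, and let $P$ be an isothetic drawing of the Horton set of $n$ points, with tree $T$, first level $T_1$ and slab $R$ as defined in the context. Then no two of the lines defined by the vertices of $T_1$ intersect inside $R$. Consequently, inside $R$ these lines are totally ordered from bottom to top, and this bottom-to-top order coincides with the left-to-right order of the corresponding vertices of $T_1$ in $T$.
   Context: For a finite set $S$ of points in the plane with pairwise distinct $x$-coordinates, list its points in increasing order of $x$-coordinate as $p_0,\dots,p_{|S|-1}$ and set $S_{\mathrm{even}}=\{p_0,p_2,\dots\}$, $S_{\mathrm{odd}}=\{p_1,p_3,\dots\}$. For point sets $X,Y$, $X$ is high above $Y$ if every line through two points of $X$ lies strictly above every point of $Y$ and every line through two points of $Y$ lies strictly below every point of $X$. A Horton set of $2^k$ points is defined recursively: a set $H$ of $2^k$ points, no three collinear, with pairwise distinct $x$-coordinates, such that for $k=0$ it is a single point and for $k\ge1$ both $H_{\mathrm{even}}$ and $H_{\mathrm{odd}}$ are Horton sets of $2^{k-1}$ points and $H_{\mathrm{odd}}$ is high above $H_{\mathrm{even}}$. An isothetic drawing of the Horton set of $n=2^k$ points is a Horton set of $n$ points all of whose points have integer coordinates. Let $P$ be such a set, with points $p_0,\dots,p_{n-1}$ sorted by $x$-coordinate. The tree $T$ is the complete rooted binary tree with root $P$ in which every vertex $Q$ with at least two points has left child $Q_{\mathrm{even}}$ and right child $Q_{\mathrm{odd}}$ (taken with respect to the $x$-order of $Q$). The left-to-right order of vertices of a given level of $T$ is their order in the standard planar drawing of $T$ in which each left child is placed before its sibling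 right child. For $0\le i\le k$, the $i$-th level $T_i$ is the set of vertices of $T$ consisting of exactly $2^i$ points. Each vertex of $T_1$ is a pair of points, and the line through them is called the line defined by that vertex. $R$ is the closed vertical slab bounded by the vertical lines through $p_{n/4}$ and $p_{3n/4-1}$. *)

theory Defs
  imports Complex_Main
begin

type_synonym point = "real \<times> real"

definition xsorted :: "point set \<Rightarrow> point list" where
  "xsorted S = sorted_key_list_of_set fst S"

definition distinct_x :: "point set \<Rightarrow> bool" where
  "distinct_x S \<longleftrightarrow> inj_on fst S"

definition even_part :: "point set \<Rightarrow> point set" where
  "even_part S = {xsorted S ! i | i. i < card S \<and> even i}"

definition odd_part :: "point set \<Rightarrow> point set" where
  "odd_part S = {xsorted S ! i | i. i < card S \<and> odd i}"

definition collinear3 :: "point \<Rightarrow> point \<Rightarrow> point \<Rightarrow> bool" where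
  "collinear3 p q r \<longleftrightarrow>
     (fst q - fst p) * (snd r - snd p) - (snd q - snd p) * (fst r - fst p) = 0"

definition no_three_collinear :: "point set \<Rightarrow> bool" where
  "no_three_collinear S \<longleftrightarrow>
     (\<forall>p\<in>S. \<forall>q\<in>S. \<forall>r\<in>S. p \<noteq> q \<and> p \<noteq> r \<and> q \<noteq> r \<longrightarrow> \<not> collinear3 p q r)"

definition line_val :: "point \<Rightarrow> point \<Rightarrow> real \<Rightarrow> real" where
  "line_val p q x = snd p + (snd q - snd p) / (fst q - fst p) * (x - fst p)"

text \<open>X is high above Y (for point sets with pairwise distinct x-coordinates, so
  all lines considered are non-vertical).\<close>
definition high_above :: "point set \<Rightarrow> point set \<Rightarrow> bool" where
  "high_above X Y \<longleftrightarrow>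
     (\<forall>p\<in>X. \<forall>q\<in>X. p \<noteq> q \<longrightarrow> (\<forall>y\<in>Y. snd y < line_val p q (fst y))) \<and>
     (\<forall>p\<in>Y. \<forall>q\<in>Y. p \<noteq> q \<longrightarrow> (\<forall>x\<in>X. line_val p q (fst x) < snd x))"

fun horton :: "nat \<Rightarrow> point set \<Rightarrow> bool" where
  "horton 0 H \<longleftrightarrow> card H = 1"
| "horton (Suc k) H \<longleftrightarrow>
     finite H \<and> card H = 2 ^ Suc k \<and> no_three_collinear H \<and> distinct_x H \<and>
     horton k (even_part H) \<and> horton k (odd_part H) \<and>
     high_above (odd_part H) (even_part H)"

text \<open>Vertices of the tree T at depth d below Q, in left-to-right order
  (left child = even part, right child = odd part).\<close>
fun tree_level :: "point set \<Rightarrow> nat \<Rightarrow> point set list" where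
  "tree_level Q 0 = [Q]"
| "tree_level Q (Suc d) = tree_level (even_part Q) d @ tree_level (odd_part Q) d"

definition vertex_line :: "point set \<Rightarrow> real \<Rightarrow> real" where
  "vertex_line V x = line_val (xsorted V ! 0) (xsorted V ! 1) x"

end

theory Submission
  imports Defs
begin

lemma (in linorder) skl_unique:
  assumes "inj_on f (set xs)" "sorted (map f xs)" "distinct xs"
  shows "sorted_key_list_of_set f (set xs) = xs"
proof -
  interpret F: folding_insort_key "(\<le>)" "(<)" "set xs" f by unfold_locales (rule assms(1))
  show ?thesis using assms by (intro F.idem_if_sorted_distinct) auto
qed

lemma (in linorder) skl_props:
  assumes "inj_on f A" "finite A"
  shows "set (sorted_key_list_of_set f A) = A \<and> length (sorted_key_list_of_set f A) = card A
     \<and> sorted_wrt (<) (map f (sorted_key_list_of_set f A))"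
proof -
  interpret F: folding_insort_key "(\<le>)" "(<)" A f by unfold_locales (rule assms(1))
  show ?thesis using assms by auto
qed

definition mono_x :: "(nat \<Rightarrow> point) \<Rightarrow> nat \<Rightarrow> bool" where
  "mono_x f m \<longleftrightarrow> (\<forall>i j. i < j \<longrightarrow> j < m \<longrightarrow> fst (f i) < fst (f j))"

lemma mono_x_eq: "mono_x f m \<Longrightarrow> i < m \<Longrightarrow> j < m \<Longrightarrow> fst (f i) = fst (f j) \<Longrightarrow> i = j"
  unfolding mono_x_def by (metis linorder_neqE_nat order.irrefl)

lemma mono_x_lt: "mono_x f m \<Longrightarrow> i < j \<Longrightarrow> j < m \<Longrightarrow> fst (f i) < fst (f j)"
  unfolding mono_x_def by blast

lemma mono_x_le: "mono_x f m \<Longrightarrow> i \<le> j \<Longrightarrow> j < m \<Longrightarrow> fst (f i) \<le> fst (f j)"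
  unfolding mono_x_def by (metis order.order_iff_strict order.strict_implies_order)

lemma mono_x_inj: "mono_x f m \<Longrightarrow> inj_on f {..<m}"
  unfolding inj_on_def by (auto dest: mono_x_eq)

lemma xsorted_img:
  assumes "mono_x f m"
  shows "xsorted (f ` {..<m}) = map f [0..<m]"
proof -
  let ?xs = "map f [0..<m]"
  have inj: "inj_on fst (set ?xs)"
    unfolding inj_on_def by (auto dest: mono_x_eq[OF assms])
  have sw: "sorted_wrt (<) (map fst ?xs)"
    using assms unfolding mono_x_def by (simp add: sorted_wrt_iff_nth_less)
  have "sorted (map fst ?xs)" using sw by (rule strict_sorted_imp_sorted)
  moreover have "distinct ?xs"
    using mono_x_inj[OF assms] by (simp add: distinct_map atLeast0LessThan)
  ultimately have "sorted_key_list_of_set fst (set ?xs) = ?xs"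
    using skl_unique[OF inj] by blast
  moreover have "set ?xs = f ` {..<m}" by (simp add: atLeast0LessThan)
  ultimately show ?thesis unfolding xsorted_def by simp
qed

lemma card_img: "mono_x f m \<Longrightarrow> card (f ` {..<m}) = m"
  using mono_x_inj card_image by fastforce

lemma even_part_img:
  assumes "mono_x f (2*h)"
  shows "even_part (f ` {..<2*h}) = (\<lambda>i. f (2*i)) ` {..<h}"
proof (rule set_eqI, rule iffI)
  fix x assume "x \<in> even_part (f ` {..<2*h})"
  then obtain i where "i < 2*h" "even i" "x = f i"
    unfolding even_part_def xsorted_img[OF assms] card_img[OF assms] by auto
  then obtain j where "i = 2*j" using evenE by blast
  then show "x \<in> (\<lambda>i. f (2*i)) ` {..<h}" using \<open>i < 2*h\<close> \<open>x = f i\<close> by auto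
next
  fix x assume "x \<in> (\<lambda>i. f (2*i)) ` {..<h}"
  then obtain j where "j < h" "x = f (2*j)" by auto
  then show "x \<in> even_part (f ` {..<2*h})"
    unfolding even_part_def xsorted_img[OF assms] card_img[OF assms]
    by (intro CollectI exI[of _ "2*j"]) auto
qed

lemma odd_part_img:
  assumes "mono_x f (2*h)"
  shows "odd_part (f ` {..<2*h}) = (\<lambda>i. f (2*i+1)) ` {..<h}"
proof (rule set_eqI, rule iffI)
  fix x assume "x \<in> odd_part (f ` {..<2*h})"
  then obtain i where "i < 2*h" "odd i" "x = f i"
    unfolding odd_part_def xsorted_img[OF assms] card_img[OF assms] by auto
  then obtain j where "i = 2*j+1" using oddE by blast
  then show "x \<in> (\<lambda>i. f (2*i+1)) ` {..<h}" using \<open>i < 2*h\<close> \<open>x = f i\<close> by auto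
next
  fix x assume "x \<in> (\<lambda>i. f (2*i+1)) ` {..<h}"
  then obtain j where "j < h" "x = f (2*j+1)" by auto
  then show "x \<in> odd_part (f ` {..<2*h})"
    unfolding odd_part_def xsorted_img[OF assms] card_img[OF assms]
    by (intro CollectI exI[of _ "2*j+1"]) auto
qed

definition slope :: "point \<Rightarrow> point \<Rightarrow> real" where
  "slope p q = (snd q - snd p) / (fst q - fst p)"

lemma lv_aff: "line_val p q t = (snd p - slope p q * fst p) + slope p q * t"
proof -
  have "line_val p q t = snd p + slope p q * (t - fst p)" unfolding line_val_def slope_def ..
  then show ?thesis by (simp add: algebra_simps)
qed

lemma lv_left: "line_val p q (fst p) = snd p"
  by (simp add: line_val_def)

lemma lv_right: "fst p \<noteq> fst q \<Longrightarrow> line_val p q (fst q) = snd q"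
  by (simp add: line_val_def)

lemma aff_pos:
  fixes c0 c1 u v x :: real
  assumes "c0 + c1*u > 0" "c0 + c1*v > 0" "u \<le> x" "x \<le> v"
  shows "c0 + c1*x > 0"
proof (cases "c1 \<ge> 0")
  case True
  then have "c1*u \<le> c1*x" using assms(3) by (simp add: mult_left_mono)
  then show ?thesis using assms(1) by linarith
next
  case False
  then have "c1*v \<le> c1*x" using assms(4) by (simp add: mult_left_mono_neg)
  then show ?thesis using assms(2) by linarith
qed

lemma vertex_pair:
  assumes "fst p < fst q"
  shows "vertex_line {p, q} x = line_val p q x"
proof -
  define g where "g = (\<lambda>i::nat. if i = 0 then p else q)"
  have mg: "mono_x g 2" unfolding mono_x_def g_def using assms by auto
  have "g ` {..<2} = {p, q}" unfolding g_def by (auto simp: numeral_2_eq_2 lessThan_Suc)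
  then have "xsorted {p, q} = [p, q]" using xsorted_img[OF mg] by (simp add: g_def numeral_2_eq_2)
  then show ?thesis by (simp add: vertex_line_def)
qed

lemma tl_length: "length (tree_level Q d) = 2^d"
  by (induction d arbitrary: Q) auto

lemma mono_x_E: "mono_x f (2*h) \<Longrightarrow> mono_x (\<lambda>i. f (2*i)) h"
  unfolding mono_x_def by auto

lemma mono_x_O: "mono_x f (2*h) \<Longrightarrow> mono_x (\<lambda>i. f (2*i+1)) h"
  unfolding mono_x_def by auto

lemma tl_first_last:
  "mono_x f (2^Suc d) \<Longrightarrow>
   tree_level (f ` {..<2^Suc d}) d ! 0 = {f 0, f (2^d)} \<and>
   tree_level (f ` {..<2^Suc d}) d ! (2^d - 1) = {f (2^d - 1), f (2^Suc d - 1)}"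
proof (induction d arbitrary: f)
  case 0
  have "f ` {..<2} = {f 0, f 1}" by (auto simp: numeral_2_eq_2 lessThan_Suc)
  then show ?case by simp
next
  case (Suc d)
  define h where "h = (2::nat)^Suc d"
  have m: "(2::nat)^Suc (Suc d) = 2*h" by (simp add: h_def)
  have mono: "mono_x f (2*h)" using Suc.prems(1)[unfolded m] .
  have E: "even_part (f ` {..<2*h}) = (\<lambda>i. f (2*i)) ` {..<h}" by (rule even_part_img[OF mono])
  have O: "odd_part (f ` {..<2*h}) = (\<lambda>i. f (2*i+1)) ` {..<h}" by (rule odd_part_img[OF mono])
  have IE: "tree_level ((\<lambda>i. f (2*i)) ` {..<h}) d ! 0 = {f 0, f (2*2^d)}"
    using Suc.IH[OF mono_x_E[OF mono, unfolded h_def]] by (simp add: h_def)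
  have IO: "tree_level ((\<lambda>i. f (2*i+1)) ` {..<h}) d ! (2^d - 1) = {f (2*(2^d - 1)+1), f (2*(2^Suc d - 1)+1)}"
    using Suc.IH[OF mono_x_O[OF mono, unfolded h_def]] by (simp add: h_def)
  have TL: "tree_level (f ` {..<2^Suc (Suc d)}) (Suc d) =
      tree_level ((\<lambda>i. f (2*i)) ` {..<h}) d @ tree_level ((\<lambda>i. f (2*i+1)) ` {..<h}) d"
    using m E O by simp
  have p: "(0::nat) < 2^d" by simp
  obtain c where c: "(2::nat)^d = Suc c" using p by (metis gr0_implies_Suc)
  have a1: "2*(2^d - 1)+1 = (2::nat)^Suc d - 1" by (simp add: c)
  have a2: "2*(2^Suc d - 1)+1 = (2::nat)^Suc (Suc d) - 1" by (simp add: c)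
  have a3: "(2::nat)^Suc d - 1 - 2^d = 2^d - 1" by (simp add: c)
  show ?case
    unfolding TL using IE IO a1 a2 a3 p by (simp add: nth_append tl_length c)
qed

lemma main:
  "mono_x f (2^Suc d) \<Longrightarrow> horton (Suc d) (f ` {..<2^Suc d}) \<Longrightarrow>
   \<forall>i<2^Suc d. 4*i < 2^Suc d \<longrightarrow> fst (f i) \<le> A \<Longrightarrow>
   \<forall>i<2^Suc d. 3*2^Suc d \<le> 4*i \<longrightarrow> B \<le> fst (f i) \<Longrightarrow>
   i < j \<Longrightarrow> j < 2^d \<Longrightarrow> A \<le> x \<Longrightarrow> x \<le> B \<Longrightarrow>
   vertex_line (tree_level (f ` {..<2^Suc d}) d ! i) x < vertex_line (tree_level (f ` {..<2^Suc d}) d ! j) x"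
proof (induction d arbitrary: f i j)
  case 0
  then show ?case by simp
next
  case (Suc d)
  define h where "h = (2::nat)^Suc d"
  have m: "(2::nat)^Suc (Suc d) = 2*h" by (simp add: h_def)
  define fE where "fE = (\<lambda>i. f (2*i))"
  define fO where "fO = (\<lambda>i. f (2*i+1))"
  have mono: "mono_x f (2*h)" using Suc.prems(1)[unfolded m] .
  have monoE: "mono_x fE (2^Suc d)" using mono_x_E[OF mono] by (simp add: fE_def h_def)
  have monoO: "mono_x fO (2^Suc d)" using mono_x_O[OF mono] by (simp add: fO_def h_def)
  have E: "even_part (f ` {..<2*h}) = fE ` {..<h}" unfolding fE_def by (rule even_part_img[OF mono])
  have O: "odd_part (f ` {..<2*h}) = fO ` {..<h}" unfolding fO_def by (rule odd_part_img[OF mono])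
  have hor0: "horton (Suc (Suc d)) (f ` {..<2*h})" using Suc.prems(2)[unfolded m] .
  have horE: "horton (Suc d) (fE ` {..<2^Suc d})" using hor0 E by (simp add: h_def)
  have horO: "horton (Suc d) (fO ` {..<2^Suc d})" using hor0 O by (simp add: h_def)
  have hab: "high_above (fO ` {..<h}) (fE ` {..<h})" using hor0 E O
    by (simp only: horton.simps)
  have TL: "tree_level (f ` {..<2^Suc (Suc d)}) (Suc d) =
      tree_level (fE ` {..<h}) d @ tree_level (fO ` {..<h}) d"
    using m E O by simp
  have lenE: "length (tree_level (fE ` {..<h}) d) = 2^d" by (rule tl_length)
  have pA: "\<And>i. i < 2*h \<Longrightarrow> 4*i < 2*h \<Longrightarrow> fst (f i) \<le> A" using Suc.prems(3) m by auto
  have pB: "\<And>i. i < 2*h \<Longrightarrow> 3*(2*h) \<le> 4*i \<Longrightarrow> B \<le> fst (f i)" using Suc.prems(4) m by auto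
  have h2: "h = 2 * 2^d" by (simp add: h_def)
  have slabEA: "\<forall>i<2^Suc d. 4*i < 2^Suc d \<longrightarrow> fst (fE i) \<le> A"
    unfolding fE_def using pA h2 by auto
  have slabEB: "\<forall>i<2^Suc d. 3*2^Suc d \<le> 4*i \<longrightarrow> B \<le> fst (fE i)"
    unfolding fE_def using pB h2 by auto
  have slabOB: "\<forall>i<2^Suc d. 3*2^Suc d \<le> 4*i \<longrightarrow> B \<le> fst (fO i)"
    unfolding fO_def using pB h2 by auto
  have slabOA: "\<forall>i<2^Suc d. 4*i < 2^Suc d \<longrightarrow> fst (fO i) \<le> A" if d1: "d \<ge> 1"
  proof (intro allI impI)
    fix i :: nat assume i: "i < 2^Suc d" "4*i < 2^Suc d"
    obtain d' where d': "d = Suc d'" using d1 by (cases d) auto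
    have "h = 4 * 2^d'" using h2 d' by simp
    then have "4*(2*i+1) < 2*h" using i h2 by simp
    moreover have "2*i+1 < 2*h" using i h2 by simp
    ultimately show "fst (fO i) \<le> A" unfolding fO_def using pA by blast
  qed
  have VIE: "vertex_line (tree_level (fE ` {..<h}) d ! i) x < vertex_line (tree_level (fE ` {..<h}) d ! j) x"
    if "i < j" "j < 2^d" for i j
    using Suc.IH[OF monoE horE slabEA slabEB that Suc.prems(7,8)] by (simp add: h_def)
  have VIO: "vertex_line (tree_level (fO ` {..<h}) d ! i) x < vertex_line (tree_level (fO ` {..<h}) d ! j) x"
    if "i < j" "j < 2^d" for i j
  proof -
    have "d \<ge> 1" using that by (cases d) auto
    then show ?thesis
      using Suc.IH[OF monoO horO slabOA slabOB that Suc.prems(7,8)] by (simp add: h_def)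
  qed
  define e1 where "e1 = fE (2^d - 1)"
  define e2 where "e2 = fE (h - 1)"
  define o1 where "o1 = fO 0"
  define o2 where "o2 = fO (2^d)"
  have FE: "tree_level (fE ` {..<h}) d ! (2^d - 1) = {e1, e2}"
    using tl_first_last[OF monoE] by (simp add: e1_def e2_def h_def)
  have FO: "tree_level (fO ` {..<h}) d ! 0 = {o1, o2}"
    using tl_first_last[OF monoO] by (simp add: o1_def o2_def h_def)
  have pos2: "(0::nat) < 2^d" by simp
  obtain c where c: "(2::nat)^d = Suc c" using pos2 gr0_implies_Suc by blast
  have lt1: "(2::nat)^d - 1 < 2 * 2^d - 1" "2 * 2^d - 1 < 2 * (2::nat)^d" by (simp_all add: c)
  have lte: "fst e1 < fst e2" unfolding e1_def e2_def
    using monoE by (rule mono_x_lt) (use lt1 in \<open>auto simp: h2\<close>)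
  have lto: "fst o1 < fst o2" unfolding o1_def o2_def
    using monoO by (rule mono_x_lt) (auto simp: h2)
  have e1E: "e1 \<in> fE ` {..<h}" unfolding e1_def using h2 lt1 by (intro imageI) simp
  have e2E: "e2 \<in> fE ` {..<h}" unfolding e2_def using h2 lt1 by (intro imageI) simp
  have o1O: "o1 \<in> fO ` {..<h}" unfolding o1_def using h2 by auto
  have o2O: "o2 \<in> fO ` {..<h}" unfolding o2_def using h2 by auto
  have eneq: "e1 \<noteq> e2" using lte by auto
  have oneq: "o1 \<noteq> o2" using lto by auto
  have up: "\<And>y. y \<in> fE ` {..<h} \<Longrightarrow> snd y < line_val o1 o2 (fst y)"
    using hab o1O o2O oneq unfolding high_above_def by blast
  have down: "\<And>y. y \<in> fO ` {..<h} \<Longrightarrow> line_val e1 e2 (fst y) < snd y"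
    using hab e1E e2E eneq unfolding high_above_def by blast
  define C1 where "C1 = slope o1 o2 - slope e1 e2"
  define C0 where "C0 = (snd o1 - slope o1 o2 * fst o1) - (snd e1 - slope e1 e2 * fst e1)"
  have aff: "\<And>t. line_val o1 o2 t - line_val e1 e2 t = C0 + C1 * t"
    unfolding C0_def C1_def lv_aff by (simp add: algebra_simps)
  have g1: "C0 + C1 * fst e1 > 0" using up[OF e1E] lv_left[of e1 e2] aff[of "fst e1"] by linarith
  have g2: "C0 + C1 * fst e2 > 0" using up[OF e2E] lv_right[of e1 e2] lte aff[of "fst e2"] by auto
  have g3: "C0 + C1 * fst o1 > 0" using down[OF o1O] lv_left[of o1 o2] aff[of "fst o1"] by linarith
  have g4: "C0 + C1 * fst o2 > 0" using down[OF o2O] lv_right[of o1 o2] lto aff[of "fst o2"] by auto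
  have cross: "line_val e1 e2 x < line_val o1 o2 x"
  proof -
    have "C0 + C1 * x > 0"
    proof (cases "d = 0")
      case True
      have "fst e1 \<le> A" unfolding e1_def fE_def using True pA h2 by auto
      moreover have "B \<le> fst o2" unfolding o2_def fO_def using True pB h2 by auto
      ultimately have "fst e1 \<le> x" "x \<le> fst o2" using Suc.prems(7,8) by linarith+
      then show ?thesis by (rule aff_pos[OF g1 g4])
    next
      case False
      then obtain d' where d': "d = Suc d'" by (cases d) auto
      have h4: "h = 4 * 2^d'" using h2 d' by simp
      have q1: "(1::nat) \<le> 2^d'" by simp
      have "1 < 2*h" "4*1 < 2*h" using h4 q1 by linarith+
      then have "fst o1 \<le> A" unfolding o1_def fO_def using pA[of 1] by simp
      moreover have "B \<le> fst e2" unfolding e2_def fE_def using pB[of "2*(h-1)"] h4 by auto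
      ultimately have "fst o1 \<le> x" "x \<le> fst e2" using Suc.prems(7,8) by linarith+
      then show ?thesis by (rule aff_pos[OF g3 g2])
    qed
    then show ?thesis using aff[of x] by linarith
  qed
  have VE_last: "vertex_line (tree_level (fE ` {..<h}) d ! (2^d - 1)) x = line_val e1 e2 x"
    using FE vertex_pair[OF lte] by simp
  have VO_first: "vertex_line (tree_level (fO ` {..<h}) d ! 0) x = line_val o1 o2 x"
    using FO vertex_pair[OF lto] by simp
  have VEle: "vertex_line (tree_level (fE ` {..<h}) d ! i) x \<le> line_val e1 e2 x" if "i < 2^d" for i
  proof (cases "i = 2^d - 1")
    case True then show ?thesis using VE_last by simp
  next
    case False
    then have "i < 2^d - 1" using that by simp
    then show ?thesis using VIE[of i "2^d - 1"] VE_last by simp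
  qed
  have VOge: "line_val o1 o2 x \<le> vertex_line (tree_level (fO ` {..<h}) d ! i) x" if "i < 2^d" for i
  proof (cases "i = 0")
    case True then show ?thesis using VO_first by simp
  next
    case False
    then show ?thesis using VIO[of 0 i] VO_first that by simp
  qed
  have ij: "i < j" "j < 2 * 2^d" using Suc.prems(5,6) by auto
  show ?case unfolding TL
  proof (cases "j < 2^d")
    case True
    then show "vertex_line ((tree_level (fE ` {..<h}) d @ tree_level (fO ` {..<h}) d) ! i) x
      < vertex_line ((tree_level (fE ` {..<h}) d @ tree_level (fO ` {..<h}) d) ! j) x"
      using VIE[of i j] ij by (simp add: nth_append lenE)
  next
    case False
    note jF = False
    show "vertex_line ((tree_level (fE ` {..<h}) d @ tree_level (fO ` {..<h}) d) ! i) x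
      < vertex_line ((tree_level (fE ` {..<h}) d @ tree_level (fO ` {..<h}) d) ! j) x"
    proof (cases "i < 2^d")
      case True
      have jd: "j - 2^d < 2^d" using jF ij by linarith
      have "vertex_line (tree_level (fE ` {..<h}) d ! i) x
          < vertex_line (tree_level (fO ` {..<h}) d ! (j - 2^d)) x"
        using VEle[OF True] VOge[OF jd] cross by linarith
      then show ?thesis using True jF by (simp add: nth_append lenE)
    next
      case False
      then show ?thesis using VIO[of "i - 2^d" "j - 2^d"] jF ij
        by (simp add: nth_append lenE)
    qed
  qed
qed

theorem lemma1:
  fixes k n :: nat and P :: "point set"
  assumes "k \<ge> 2"
    and "n = 2 ^ k"
    and "horton k P"
    and "\<forall>p\<in>P. fst p \<in> \<int> \<and> snd p \<in> \<int>"
  shows "(let T1 = tree_level P (k - 1);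
              a = fst (xsorted P ! (n div 4));
              b = fst (xsorted P ! (3 * n div 4 - 1))
          in (\<forall>i j x. i < length T1 \<and> j < length T1 \<and> i \<noteq> j \<and> a \<le> x \<and> x \<le> b
                 \<longrightarrow> vertex_line (T1 ! i) x \<noteq> vertex_line (T1 ! j) x) \<and>
             (\<forall>i j x. i < j \<and> j < length T1 \<and> a \<le> x \<and> x \<le> b
                 \<longrightarrow> vertex_line (T1 ! i) x < vertex_line (T1 ! j) x))"
proof -
  obtain d where kd: "k = Suc d" and d1: "d \<ge> 1" using assms(1) by (cases k) auto
  obtain d' where d': "d = Suc d'" using d1 by (cases d) auto
  have hP: "horton (Suc d) P" using assms(3) kd by simp
  then have fin: "finite P" and cardP: "card P = 2^Suc d" and dx: "distinct_x P"
    by (simp_all only: horton.simps)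
  define xs where "xs = xsorted P"
  have inj: "inj_on fst P" using dx unfolding distinct_x_def .
  have props: "set xs = P" "length xs = card P" "sorted_wrt (<) (map fst xs)"
    using skl_props[OF inj fin] unfolding xs_def xsorted_def by auto
  define f where "f = (\<lambda>i. xs ! i)"
  have nn: "n = 2^Suc d" using assms(2) kd by simp
  have lenxs: "length xs = n" using props(2) cardP nn by simp
  have mono: "mono_x f n"
    unfolding mono_x_def f_def using props(3) lenxs by (simp add: sorted_wrt_iff_nth_less)
  have Pimg: "P = f ` {..<n}"
    unfolding f_def props(1)[symmetric] using lenxs by (auto simp: set_conv_nth)
  define c where "c = (2::nat)^d'"
  have c1: "1 \<le> c" unfolding c_def by simp
  have nc: "n = 4*c" unfolding nn c_def d' by simp
  have a_eq: "xsorted P ! (n div 4) = f c" unfolding f_def xs_def nc by simp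
  have b_eq: "xsorted P ! (3 * n div 4 - 1) = f (3*c - 1)" unfolding f_def xs_def nc by simp
  have slabA: "\<forall>i<2^Suc d. 4*i < 2^Suc d \<longrightarrow> fst (f i) \<le> fst (f c)"
  proof (intro allI impI)
    fix i :: nat assume "i < 2^Suc d" "4*i < 2^Suc d"
    then have "i \<le> c" "c < n" using nc nn c1 by linarith+
    then show "fst (f i) \<le> fst (f c)" by (rule mono_x_le[OF mono])
  qed
  have slabB: "\<forall>i<2^Suc d. 3*2^Suc d \<le> 4*i \<longrightarrow> fst (f (3*c - 1)) \<le> fst (f i)"
  proof (intro allI impI)
    fix i :: nat assume "i < 2^Suc d" "3*2^Suc d \<le> 4*i"
    then have "3*c - 1 \<le> i" "i < n" using nc nn c1 by linarith+
    then show "fst (f (3*c - 1)) \<le> fst (f i)" by (rule mono_x_le[OF mono])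
  qed
  have monoS: "mono_x f (2^Suc d)" using mono nn by simp
  have horS: "horton (Suc d) (f ` {..<2^Suc d})" using hP Pimg nn by simp
  have lenT: "length (tree_level P (k - 1)) = 2^d" using kd tl_length by simp
  have ord: "vertex_line (tree_level P (k - 1) ! i) x < vertex_line (tree_level P (k - 1) ! j) x"
    if "i < j" "j < 2^d" "fst (f c) \<le> x" "x \<le> fst (f (3*c - 1))" for i j x
  proof -
    have "tree_level P (k - 1) = tree_level (f ` {..<2^Suc d}) d" using Pimg nn kd by simp
    then show ?thesis using main[OF monoS horS slabA slabB that] by simp
  qed
  show ?thesis
    unfolding Let_def a_eq b_eq lenT
  proof (intro conjI allI impI)
    fix i j :: nat and x :: real assume H: "i < 2^d \<and> j < 2^d \<and> i \<noteq> j \<and> fst (f c) \<le> x \<and> x \<le> fst (f (3*c - 1))"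
    show "vertex_line (tree_level P (k - 1) ! i) x \<noteq> vertex_line (tree_level P (k - 1) ! j) x"
    proof (cases "i < j")
      case True then show ?thesis using ord[of i j x] H by simp
    next
      case False then have "j < i" using H by simp
      then show ?thesis using ord[of j i x] H by simp
    qed
  next
    fix i j :: nat and x :: real assume H: "i < j \<and> j < 2^d \<and> fst (f c) \<le> x \<and> x \<le> fst (f (3*c - 1))"
    then show "vertex_line (tree_level P (k - 1) ! i) x < vertex_line (tree_level P (k - 1) ! j) x"
      using ord by blast
  qed
qed

end
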